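(* Let $\Sigma_0$ be a symmetric positive definite $d\times d$ matrix, $A=\Sigma_0^{1/2}$, $y\in\mathbb{R}^d$ and $z_0=A^{-1}y$. Let $g(x)=\sum_{|\alpha|\le m}a_\alpha x^\alpha$ be a polynomial on $\mathbb{R}^d$, let $\phi$ be the standard normal density on $\mathbb{R}^d$, $\varphi_V(\omega)=e^{-\|\omega\|_2^2/2}$, and define $\lambda(w)=g(Aw)\phi(z_0-w)$ and $Q(\omega)=\widetilde{\lambda}(\omega)/\varphi_V(-\omega)$. Then \[ Q(\omega)=e^{i\omega^\top z_0}\sum_{|\gamma|\le m}b_\gamma(y,\Sigma_0)(i\omega)^\gamma,\qquad b_\gamma(y,\Sigma_0)=\sum_{|\alpha|\le m}a_\alpha\sum_{\beta\ge\gamma}C_{\alpha,\beta}(A)\binom{\beta}{\gamma}m_{\beta-\gamma}(z_0), \] where $C_{\alpha,\beta}(A)=\sum_{N\in\mathcal{N}(\alpha,\beta)}\frac{\alpha!}{N!}A^N$, with $\mathcal{N}(\alpha,\beta)=\{N=(n_{jk})\in\mathbb{N}^{d\times d}:\sum_kn_{jk}=\alpha_j,\ \sum_jn_{jk}=\beta_k\}$, $\alpha!=\prod_j\alpha_j!$, $N!=\prod_{j,k}n_{jk}!$, $A^N=\prod_{j,k}A_{jk}^{n_{jk}}$, and \[ m_\nu(z_0)=\prod_{r=1}^d\sum_{q=0}^{\lfloor\nu_r/2\rfloor}\frac{\nu_r!}{2^qq!(\nu_r-2q)!}z_{0,r}^{\nu_r-2q}. \]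
   Context: $\widetilde\psi(\omega)=\int e^{i\omega^\top x}\psi(x)dx$. Multi-index notation: $x^\alpha=\prod_jx_j^{\alpha_j}$, $(i\omega)^\gamma=\prod_j(i\omega_j)^{\gamma_j}$, $\beta\ge\gamma$ means $\beta_j\ge\gamma_j$ for all $j$ (the sum over $\beta$ ranges over multi-indices with $|\beta|\le m$), $\binom{\beta}{\gamma}=\prod_j\binom{\beta_j}{\gamma_j}$. *)

theory Defs
  imports "HOL-Analysis.Analysis"
begin

text \<open>Multi-indices on the index type 'n (dimension d = CARD('n)).\<close>

definition mi_abs :: "('n::finite \<Rightarrow> nat) \<Rightarrow> nat" where
  "mi_abs \<alpha> = (\<Sum>j\<in>UNIV. \<alpha> j)"

definition multi_indices :: "nat \<Rightarrow> ('n::finite \<Rightarrow> nat) set" where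
  "multi_indices m = {\<alpha>. mi_abs \<alpha> \<le> m}"

definition mi_fact :: "('n::finite \<Rightarrow> nat) \<Rightarrow> real" where
  "mi_fact \<alpha> = (\<Prod>j\<in>UNIV. fact (\<alpha> j))"

definition mi_binom :: "('n::finite \<Rightarrow> nat) \<Rightarrow> ('n \<Rightarrow> nat) \<Rightarrow> real" where
  "mi_binom \<beta> \<gamma> = (\<Prod>j\<in>UNIV. real (\<beta> j choose \<gamma> j))"

definition mi_pow :: "real^'n::finite \<Rightarrow> ('n \<Rightarrow> nat) \<Rightarrow> real" where
  "mi_pow x \<alpha> = (\<Prod>j\<in>UNIV. (x $ j) ^ \<alpha> j)"

definition mi_ipow :: "real^'n::finite \<Rightarrow> ('n \<Rightarrow> nat) \<Rightarrow> complex" where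
  "mi_ipow \<omega> \<gamma> = (\<Prod>j\<in>UNIV. (\<i> * complex_of_real (\<omega> $ j)) ^ \<gamma> j)"

definition mpoly_eval :: "nat \<Rightarrow> (('n::finite \<Rightarrow> nat) \<Rightarrow> real) \<Rightarrow> real^'n \<Rightarrow> real" where
  "mpoly_eval m a x = (\<Sum>\<alpha>\<in>multi_indices m. a \<alpha> * mi_pow x \<alpha>)"

definition std_normal_density :: "real^'n::finite \<Rightarrow> real" where
  "std_normal_density x = (2 * pi) powr (- real CARD('n) / 2) * exp (- (norm x)\<^sup>2 / 2)"

definition phi_V :: "real^'n::finite \<Rightarrow> real" where
  "phi_V \<omega> = exp (- (norm \<omega>)\<^sup>2 / 2)"

definition fourier :: "(real^'n::finite \<Rightarrow> complex) \<Rightarrow> real^'n \<Rightarrow> complex" where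
  "fourier \<psi> \<omega> = integral\<^sup>L lborel (\<lambda>x. cis (\<omega> \<bullet> x) * \<psi> x)"

definition Nset :: "('n::finite \<Rightarrow> nat) \<Rightarrow> ('n \<Rightarrow> nat) \<Rightarrow> ('n \<Rightarrow> 'n \<Rightarrow> nat) set" where
  "Nset \<alpha> \<beta> = {N. (\<forall>j. (\<Sum>k\<in>UNIV. N j k) = \<alpha> j) \<and> (\<forall>k. (\<Sum>j\<in>UNIV. N j k) = \<beta> k)}"

definition Ccoef :: "('n::finite \<Rightarrow> nat) \<Rightarrow> ('n \<Rightarrow> nat) \<Rightarrow> real^'n^'n \<Rightarrow> real" where
  "Ccoef \<alpha> \<beta> A = (\<Sum>N\<in>Nset \<alpha> \<beta>.
      mi_fact \<alpha> / (\<Prod>j\<in>UNIV. \<Prod>k\<in>UNIV. fact (N j k))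
      * (\<Prod>j\<in>UNIV. \<Prod>k\<in>UNIV. (A $ j $ k) ^ N j k))"

text \<open>m_nu(z) (Gaussian moments about z).\<close>
definition mnu :: "('n::finite \<Rightarrow> nat) \<Rightarrow> real^'n \<Rightarrow> real" where
  "mnu \<nu> z = (\<Prod>r\<in>UNIV. \<Sum>q = 0..\<nu> r div 2.
      fact (\<nu> r) / (2 ^ q * fact q * fact (\<nu> r - 2 * q)) * (z $ r) ^ (\<nu> r - 2 * q))"

definition bcoef :: "nat \<Rightarrow> (('n::finite \<Rightarrow> nat) \<Rightarrow> real) \<Rightarrow> real^'n^'n \<Rightarrow> real^'n
                     \<Rightarrow> ('n \<Rightarrow> nat) \<Rightarrow> real" where
  "bcoef m a A z0 \<gamma> = (\<Sum>\<alpha>\<in>multi_indices m. a \<alpha> *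
      (\<Sum>\<beta>\<in>{\<beta>\<in>multi_indices m. \<forall>j. \<gamma> j \<le> \<beta> j}.
          Ccoef \<alpha> \<beta> A * mi_binom \<beta> \<gamma> * mnu (\<lambda>j. \<beta> j - \<gamma> j) z0))"

end

theory Submission
  imports Defs "HOL-Probability.Characteristic_Functions" "HOL-Real_Asymp.Real_Asymp"
begin


definition phi1 :: "real \<Rightarrow> real" where
  "phi1 u = 1 / sqrt (2 * pi) * exp (- u\<^sup>2 / 2)"

lemma nd_phi1: "normal_density 0 1 = phi1"
  by (rule ext) (simp add: Distributions.std_normal_density_def phi1_def)

lemma continuous_on_phi1[continuous_intros]:
  "continuous_on S f \<Longrightarrow> continuous_on S (\<lambda>x. phi1 (f x))"
  unfolding phi1_def by (intro continuous_intros) auto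

lemma isCont_phi1[continuous_intros]: "isCont f x \<Longrightarrow> isCont (\<lambda>x. phi1 (f x)) x"
  unfolding phi1_def by (intro continuous_intros) auto

lemma phi1_nonneg: "0 \<le> phi1 u" by (simp add: phi1_def)
lemma phi1_even: "phi1 (- u) = phi1 u" by (simp add: phi1_def)

lemma integrable_mom: "integrable lborel (\<lambda>u. u ^ j * phi1 u)"
  using integrable_std_normal_moment[of j] by (simp add: nd_phi1 mult.commute)

lemma integrable_poly_phi1: "integrable lborel (\<lambda>u. (z + u) ^ k * phi1 u)"
proof -
  have e: "(\<lambda>u. (z + u) ^ k * phi1 u) = (\<lambda>u. \<Sum>j\<le>k. (real (k choose j) * z ^ (k - j)) * (u ^ j * phi1 u))"
    by (rule ext) (simp add: add.commute[of z] binomial_ring sum_distrib_right sum_distrib_left mult_ac)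
  show ?thesis unfolding e
    by (intro Bochner_Integration.integrable_sum Bochner_Integration.integrable_mult_right integrable_mom)
qed

lemma cis_eq_exp: "cis (w * u) = exp (\<i> * of_real w * of_real u)"
  by (simp add: cis_conv_exp mult_ac)

lemma integrable_G: "integrable lborel (\<lambda>u. cis (w * u) * of_real ((z + u) ^ k * phi1 u))"
proof (rule Bochner_Integration.integrable_bound[OF integrable_poly_phi1[of z k]])
  show "(\<lambda>u. cis (w * u) * of_real ((z + u) ^ k * phi1 u)) \<in> borel_measurable lborel"
    unfolding measurable_lborel2 by (intro borel_measurable_continuous_onI continuous_intros)
  show "AE x in lborel. norm (cis (w * x) * complex_of_real ((z + x) ^ k * phi1 x)) \<le> norm ((z + x) ^ k * phi1 x)"
    by (simp only: norm_mult norm_of_real norm_cis) (simp add: abs_mult)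
qed

lemma DERIV_phi1: "(phi1 has_real_derivative (- u * phi1 u)) (at u)"
  unfolding phi1_def by (auto intro!: derivative_eq_intros simp: field_simps)

lemma lim_top: "((\<lambda>u. \<bar>z + u\<bar> ^ k * phi1 u) \<longlongrightarrow> 0) at_top"
proof -
  have l1: "((\<lambda>u. (z + u) ^ k / exp (z + u)) \<longlongrightarrow> 0) at_top"
    by (rule filterlim_compose[OF tendsto_power_div_exp_0])
       (rule filterlim_tendsto_add_at_top[OF tendsto_const filterlim_ident])
  have l2: "((\<lambda>u. exp (z + u) * (1 / sqrt (2 * pi) * exp (- u\<^sup>2 / 2))) \<longlongrightarrow> 0) at_top"
    by real_asymp
  have "((\<lambda>u. (z + u) ^ k / exp (z + u) * (exp (z + u) * (1 / sqrt (2 * pi) * exp (- u\<^sup>2 / 2)))) \<longlongrightarrow> 0 * 0) at_top"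
    by (rule tendsto_mult[OF l1 l2])
  moreover have "\<forall>\<^sub>F u in at_top. (z + u) ^ k / exp (z + u) * (exp (z + u) * (1 / sqrt (2 * pi) * exp (- u\<^sup>2 / 2)))
      = \<bar>z + u\<bar> ^ k * phi1 u"
    using eventually_ge_at_top[of "- z"] by eventually_elim (simp add: phi1_def)
  ultimately show ?thesis by (simp add: tendsto_cong)
qed

lemma lim_bot: "((\<lambda>u. \<bar>z + u\<bar> ^ k * phi1 u) \<longlongrightarrow> 0) at_bot"
  unfolding filterlim_at_bot_mirror using lim_top[of "- z" k]
  by (simp add: phi1_even abs_minus_commute)

definition G :: "nat \<Rightarrow> real \<Rightarrow> real \<Rightarrow> complex" where
  "G k z w = integral\<^sup>L lborel (\<lambda>u. cis (w * u) * of_real ((z + u) ^ k * phi1 u))"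

lemma G_rec: "G (Suc k) z w = (of_real z + \<i> * of_real w) * G k z w + of_nat k * G (k - 1) z w"
proof -
  define e where "e j u = cis (w * u) * of_real ((z + u) ^ j * phi1 u)" for j u
  define F where "F u = exp (\<i> * of_real w * of_real u) * of_real ((z + u) ^ k * phi1 u)" for u
  define f where "f u = \<i> * of_real w * e k u + of_nat k * e (k - 1) u - e (Suc k) u + of_real z * e k u" for u
  have ie: "integrable lborel (e j)" for j unfolding e_def by (rule integrable_G)
  have der: "(F has_vector_derivative f x) (at x)" for x
  proof -
    have d1: "((\<lambda>u. exp (\<i> * of_real w * of_real u)) has_vector_derivative (\<i> * of_real w * exp (\<i> * of_real w * of_real x))) (at x)"
      by (rule has_vector_derivative_real_field) (auto intro!: derivative_eq_intros)
    have d2: "((\<lambda>u. (z + u) ^ k * phi1 u) has_real_derivative (real k * (z + x) ^ (k - 1) * phi1 x + (z + x) ^ k * (- x * phi1 x))) (at x)"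
      by (auto intro!: derivative_eq_intros DERIV_phi1)
    have "(F has_vector_derivative (exp (\<i> * of_real w * of_real x) * of_real (real k * (z + x) ^ (k - 1) * phi1 x + (z + x) ^ k * (- x * phi1 x))
        + \<i> * of_real w * exp (\<i> * of_real w * of_real x) * of_real ((z + x) ^ k * phi1 x))) (at x)"
      unfolding F_def by (intro has_vector_derivative_mult d1 has_vector_derivative_of_real d2)
    moreover have "exp (\<i> * of_real w * of_real x) * of_real (real k * (z + x) ^ (k - 1) * phi1 x + (z + x) ^ k * (- x * phi1 x))
        + \<i> * of_real w * exp (\<i> * of_real w * of_real x) * of_real ((z + x) ^ k * phi1 x) = f x"
      unfolding f_def e_def cis_eq_exp by (simp add: algebra_simps)
    ultimately show ?thesis by simp
  qed
  have cf: "isCont f x" for x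
    unfolding f_def e_def cis_eq_exp by (intro continuous_intros)
  have intf: "integrable lborel f"
    unfolding f_def by (intro Bochner_Integration.integrable_add Bochner_Integration.integrable_diff
      Bochner_Integration.integrable_mult_right ie)
  have nF: "norm (F u) = \<bar>z + u\<bar> ^ k * phi1 u" for u
  proof -
    have "F u = cis (w * u) * of_real ((z + u) ^ k * phi1 u)" unfolding F_def cis_eq_exp ..
    then show ?thesis by (simp only: norm_mult norm_of_real norm_cis) (simp add: abs_mult power_abs phi1_nonneg)
  qed
  have FT: "(F \<longlongrightarrow> 0) at_top"
    by (rule tendsto_norm_zero_cancel) (simp only: nF lim_top)
  have FB: "(F \<longlongrightarrow> 0) at_bot"
    by (rule tendsto_norm_zero_cancel) (simp only: nF lim_bot)
  have "(LBINT x=-\<infinity>..\<infinity>. f x) = 0 - 0"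
    by (rule interval_integral_FTC_integrable[where F = F])
       (use der cf intf FT FB in \<open>auto simp: ereal_tendsto_simps1 set_integrable_def\<close>)
  then have "integral\<^sup>L lborel f = 0"
    by (simp add: interval_lebesgue_integral_def set_lebesgue_integral_def)
  moreover have "integral\<^sup>L lborel f = \<i> * of_real w * G k z w + of_nat k * G (k - 1) z w - G (Suc k) z w + of_real z * G k z w"
    unfolding f_def G_def e_def[symmetric]
    by (simp add: ie Bochner_Integration.integrable_add Bochner_Integration.integrable_diff
      Bochner_Integration.integrable_mult_right)
  ultimately show ?thesis by (simp add: algebra_simps)
qed


lemma G0: "G 0 z w = of_real (exp (- w\<^sup>2 / 2))"
proof -
  have "char std_normal_distribution w = of_real (exp (- (w^2)/2))"
    using char_std_normal_distribution by simp
  moreover have "char std_normal_distribution w = integral\<^sup>L lborel (\<lambda>x. normal_density 0 1 x *\<^sub>R iexp (w * x))"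
    unfolding char_def
    by (subst integral_density) (auto simp: normal_density_nonneg cis_conv_exp[symmetric]
        intro!: borel_measurable_continuous_onI continuous_intros)
  ultimately show ?thesis unfolding G_def by (simp add: nd_phi1 scaleR_conv_of_real cis_conv_exp mult.commute)
qed

definition m1 :: "nat \<Rightarrow> real \<Rightarrow> real" where
  "m1 k z = (\<Sum>q = 0..k div 2. fact k / (2 ^ q * fact q * fact (k - 2 * q)) * z ^ (k - 2 * q))"

definition Mom :: "nat \<Rightarrow> real" where
  "Mom j = (if even j then fact j / (2 ^ (j div 2) * fact (j div 2)) else 0)"

lemma int_mom: "integral\<^sup>L lborel (\<lambda>u. u ^ j * phi1 u) = Mom j"
proof (cases "even j")
  case True
  then obtain q where j: "j = 2 * q" by (auto elim: evenE)
  show ?thesis using integral_std_normal_moment_even[of q] j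
    by (simp add: Mom_def nd_phi1 mult.commute)
next
  case False
  then obtain q where j: "j = 2 * q + 1" by (auto elim: oddE)
  show ?thesis using integral_std_normal_moment_odd[of q] j
    by (simp add: Mom_def nd_phi1 mult.commute)
qed

lemma int_poly: "integral\<^sup>L lborel (\<lambda>u. (z + u) ^ k * phi1 u) = (\<Sum>j\<le>k. real (k choose j) * z ^ (k - j) * Mom j)"
proof -
  have e: "(\<lambda>u. (z + u) ^ k * phi1 u) = (\<lambda>u. \<Sum>j\<le>k. (real (k choose j) * z ^ (k - j)) * (u ^ j * phi1 u))"
    by (rule ext) (simp add: add.commute[of z] binomial_ring sum_distrib_right sum_distrib_left mult_ac)
  show ?thesis unfolding e
    by (simp add: Bochner_Integration.integral_sum Bochner_Integration.integrable_mult_right integrable_mom int_mom)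
qed

lemma sum_even_reindex:
  fixes g :: "nat \<Rightarrow> real"
  assumes "\<And>j. odd j \<Longrightarrow> g j = 0"
  shows "(\<Sum>j\<le>k. g j) = (\<Sum>q = 0..k div 2. g (2 * q))"
proof -
  have "(\<Sum>q = 0..k div 2. g (2 * q)) = sum g ((\<lambda>q. 2 * q) ` {0..k div 2})"
    by (subst sum.reindex) (auto simp: inj_on_def)
  also have "\<dots> = (\<Sum>j\<le>k. g j)"
  proof (rule sum.mono_neutral_left)
    show "\<forall>i\<in>{..k} - (\<lambda>q. 2 * q) ` {0..k div 2}. g i = 0"
    proof
      fix i assume i: "i \<in> {..k} - (\<lambda>q. 2 * q) ` {0..k div 2}"
      show "g i = 0"
      proof (cases "even i")
        case True
        then have "i = 2 * (i div 2)" by simp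
        moreover have "i div 2 \<in> {0..k div 2}" using i by (auto intro: div_le_mono)
        ultimately show ?thesis using i by blast
      qed (rule assms)
    qed
  qed auto
  finally show ?thesis ..
qed

lemma m1_eq: "m1 k z = (\<Sum>j\<le>k. real (k choose j) * z ^ (k - j) * Mom j)"
proof -
  have "(\<Sum>j\<le>k. real (k choose j) * z ^ (k - j) * Mom j) =
        (\<Sum>q = 0..k div 2. real (k choose (2 * q)) * z ^ (k - 2 * q) * Mom (2 * q))"
    by (rule sum_even_reindex) (simp add: Mom_def)
  also have "\<dots> = m1 k z" unfolding m1_def
  proof (rule sum.cong[OF refl])
    fix q assume "q \<in> {0..k div 2}"
    then have q: "2 * q \<le> k" by auto
    show "real (k choose (2 * q)) * z ^ (k - 2 * q) * Mom (2 * q) =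
          fact k / (2 ^ q * fact q * fact (k - 2 * q)) * z ^ (k - 2 * q)"
      using q by (simp add: binomial_fact Mom_def field_simps)
  qed
  finally show ?thesis ..
qed

lemma G_w0: "G k z 0 = of_real (m1 k z)"
proof -
  have "G k z 0 = integral\<^sup>L lborel (\<lambda>u. of_real ((z + u) ^ k * phi1 u))"
    unfolding G_def by simp
  also have "\<dots> = of_real (integral\<^sup>L lborel (\<lambda>u. (z + u) ^ k * phi1 u))"
    by (rule integral_of_real) (rule integrable_poly_phi1)
  finally show ?thesis by (simp add: int_poly m1_eq)
qed

lemma m1_rec: "m1 (Suc k) z = z * m1 k z + real k * m1 (k - 1) z"
proof -
  have "complex_of_real (m1 (Suc k) z) = of_real (z * m1 k z + real k * m1 (k - 1) z)"
    using G_rec[of k z 0] by (simp add: G_w0)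
  then show ?thesis by (simp only: of_real_eq_iff)
qed

lemma m1_0: "m1 0 z = 1" by (simp add: m1_def)

definition D :: "nat \<Rightarrow> real \<Rightarrow> complex \<Rightarrow> complex" where
  "D k z t = (\<Sum>g\<le>k. of_nat (k choose g) * of_real (m1 (k - g) z) * t ^ g)"

lemma D_rec: "D (Suc k) z t = (of_real z + t) * D k z t + of_nat k * D (k - 1) z t"
proof -
  let ?M = "\<lambda>j. complex_of_real (m1 j z)"
  have "D (Suc k) z t = ?M (Suc k) + (\<Sum>g\<le>k. of_nat (Suc k choose Suc g) * ?M (k - g) * t ^ Suc g)"
    unfolding D_def by (subst sum.atMost_Suc_shift) simp
  also have "\<dots> = ?M (Suc k) + (\<Sum>g\<le>k. of_nat (k choose Suc g) * ?M (k - g) * t ^ Suc g)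
       + (\<Sum>g\<le>k. of_nat (k choose g) * ?M (k - g) * t ^ Suc g)"
    by (simp add: algebra_simps sum.distrib)
  also have "(\<Sum>g\<le>k. of_nat (k choose g) * ?M (k - g) * t ^ Suc g) = t * D k z t"
    unfolding D_def by (simp add: sum_distrib_left algebra_simps)
  also have "?M (Suc k) + (\<Sum>g\<le>k. of_nat (k choose Suc g) * ?M (k - g) * t ^ Suc g)
      = (\<Sum>g\<le>Suc k. of_nat (k choose g) * ?M (Suc k - g) * t ^ g)"
    by (subst sum.atMost_Suc_shift) simp
  also have "\<dots> = (\<Sum>g\<le>k. of_nat (k choose g) * ?M (Suc (k - g)) * t ^ g)"
    by (simp add: Suc_diff_le)
  also have "\<dots> = (\<Sum>g\<le>k. of_nat (k choose g) * (of_real z * ?M (k - g) + of_nat (k - g) * ?M (k - g - 1)) * t ^ g)"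
    by (simp add: m1_rec)
  also have "\<dots> = (\<Sum>g\<le>k. of_real z * (of_nat (k choose g) * ?M (k - g) * t ^ g)
      + of_nat ((k - g) * (k choose g)) * ?M (k - 1 - g) * t ^ g)"
    by (rule sum.cong[OF refl]) (simp only: distrib_left distrib_right of_nat_mult mult_ac diff_diff_left add.commute[of 1])
  also have "\<dots> = of_real z * D k z t + (\<Sum>g\<le>k. of_nat ((k - g) * (k choose g)) * ?M (k - 1 - g) * t ^ g)"
    unfolding D_def sum.distrib sum_distrib_left ..

  also have "(\<Sum>g\<le>k. of_nat ((k - g) * (k choose g)) * ?M (k - 1 - g) * t ^ g) = of_nat k * D (k - 1) z t"
  proof (cases k)
    case 0
    then show ?thesis by (simp add: D_def)
  next
    case (Suc n)
    have "(\<Sum>g\<le>k. of_nat ((k - g) * (k choose g)) * ?M (k - 1 - g) * t ^ g)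
        = (\<Sum>g\<le>k. of_nat k * (of_nat (n choose g) * ?M (n - g) * t ^ g))"
      unfolding binomial_absorb_comp using Suc by (simp add: algebra_simps)
    also have "\<dots> = of_nat k * (\<Sum>g\<le>Suc n. of_nat (n choose g) * ?M (n - g) * t ^ g)"
      using Suc by (simp only: sum_distrib_left)
    also have "\<dots> = of_nat k * D (k - 1) z t"
      using Suc by (simp add: D_def)
    finally show ?thesis .
  qed
  finally show ?thesis by (simp add: algebra_simps)
qed

lemma G_eq: "G k z w = of_real (exp (- w\<^sup>2 / 2)) * D k z (\<i> * of_real w)"
proof (induction k rule: less_induct)
  case (less k)
  show ?case
  proof (cases k)
    case 0
    then show ?thesis by (simp add: G0 D_def m1_0)
  next
    case (Suc j)
    have "G k z w = (of_real z + \<i> * of_real w) * G j z w + of_nat j * G (j - 1) z w"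
      using Suc G_rec by simp
    also have "\<dots> = of_real (exp (- w\<^sup>2 / 2)) * ((of_real z + \<i> * of_real w) * D j z (\<i> * of_real w)
        + of_nat j * D (j - 1) z (\<i> * of_real w))"
      using less.IH[of j] less.IH[of "j - 1"] Suc by (simp add: algebra_simps)
    also have "\<dots> = of_real (exp (- w\<^sup>2 / 2)) * D k z (\<i> * of_real w)"
      using Suc D_rec by simp
    finally show ?thesis .
  qed
qed

lemma K1_integrable: "integrable lborel (\<lambda>t. cis (w * t) * of_real (t ^ k * phi1 (z - t)))"
proof -
  have "integrable lborel (\<lambda>x. cis (w * z) * (cis (w * x) * of_real ((z + x) ^ k * phi1 x)))"
    by (intro Bochner_Integration.integrable_mult_right integrable_G)
  also have "(\<lambda>x. cis (w * z) * (cis (w * x) * of_real ((z + x) ^ k * phi1 x)))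
      = (\<lambda>x. (\<lambda>t. cis (w * t) * of_real (t ^ k * phi1 (z - t))) (z + 1 * x))"
    by (rule ext) (simp add: cis_mult[symmetric] distrib_left phi1_even)
  finally show ?thesis
    using lborel_integrable_real_affine_iff[of 1 "\<lambda>t. cis (w * t) * of_real (t ^ k * phi1 (z - t))" z]
    by simp
qed

lemma K1: "integral\<^sup>L lborel (\<lambda>t. cis (w * t) * of_real (t ^ k * phi1 (z - t)))
    = cis (w * z) * (of_real (exp (- w\<^sup>2 / 2)) * D k z (\<i> * of_real w))"
proof -
  have "integral\<^sup>L lborel (\<lambda>t. cis (w * t) * of_real (t ^ k * phi1 (z - t)))
     = integral\<^sup>L lborel (\<lambda>x. (\<lambda>t. cis (w * t) * of_real (t ^ k * phi1 (z - t))) (z + 1 * x))"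
    using lborel_integral_real_affine[of 1 "\<lambda>t. cis (w * t) * of_real (t ^ k * phi1 (z - t))" z]
    by simp
  also have "\<dots> = integral\<^sup>L lborel (\<lambda>x. cis (w * z) * (cis (w * x) * of_real ((z + x) ^ k * phi1 x)))"
    by (rule Bochner_Integration.integral_cong) (simp_all add: cis_mult[symmetric] distrib_left phi1_even)
  also have "\<dots> = cis (w * z) * G k z w"
    unfolding G_def by simp
  finally show ?thesis by (simp add: G_eq)
qed



lemma lborel_prod_Basis:
  fixes g :: "'a::euclidean_space \<Rightarrow> real \<Rightarrow> complex"
  assumes ig: "\<And>b. b \<in> Basis \<Longrightarrow> integrable lborel (g b)"
  shows "integrable lborel (\<lambda>x. \<Prod>b\<in>Basis. g b (x \<bullet> b))"
    and "integral\<^sup>L lborel (\<lambda>x. \<Prod>b\<in>Basis. g b (x \<bullet> b)) = (\<Prod>b\<in>Basis. integral\<^sup>L lborel (g b))"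
proof -
  interpret P: product_sigma_finite "\<lambda>_::'a. lborel :: real measure"
    by standard
  let ?T = "\<lambda>f. \<Sum>b\<in>Basis. f b *\<^sub>R (b::'a)"
  have mT: "?T \<in> measurable (\<Pi>\<^sub>M b\<in>Basis. lborel) borel"
    by measurable
  have mg[measurable]: "g b \<in> borel_measurable borel" if "b \<in> Basis" for b
    using borel_measurable_integrable[OF ig[OF that]] by simp
  have mf: "(\<lambda>x. \<Prod>b\<in>Basis. g b (x \<bullet> b)) \<in> borel_measurable borel"
    by measurable
  have eq: "(\<lambda>x. (\<lambda>x. \<Prod>b\<in>Basis. g b (x \<bullet> b)) (?T x)) = (\<lambda>x. \<Prod>b\<in>Basis. g b (x b))"
    by (rule ext) (simp add: inner_sum_left_Basis)
  show "integrable lborel (\<lambda>x. \<Prod>b\<in>Basis. g b (x \<bullet> b))"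
    apply (subst lborel_eq)
    apply (subst integrable_distr_eq[OF mT mf])
    unfolding eq
    by (rule P.product_integrable_prod) (auto intro: ig)
  show "integral\<^sup>L lborel (\<lambda>x. \<Prod>b\<in>Basis. g b (x \<bullet> b)) = (\<Prod>b\<in>Basis. integral\<^sup>L lborel (g b))"
    apply (subst lborel_eq)
    apply (subst integral_distr[OF mT mf])
    unfolding eq
    by (rule P.product_integral_prod) (auto intro: ig)
qed

lemma Basis_vec_eq: "(Basis :: (real^'n) set) = range (\<lambda>i. axis i 1)"
  by (auto simp: Basis_vec_def)

lemma inj_axis1: "inj (\<lambda>i::'n::finite. axis i (1::real))"
  by (auto simp: inj_def axis_eq_axis)

lemma lborel_prod_vec:
  fixes f :: "'n::finite \<Rightarrow> real \<Rightarrow> complex"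
  assumes ig: "\<And>j. integrable lborel (f j)"
  shows "integrable lborel (\<lambda>x::real^'n. \<Prod>j\<in>UNIV. f j (x $ j))"
    and "integral\<^sup>L lborel (\<lambda>x::real^'n. \<Prod>j\<in>UNIV. f j (x $ j)) = (\<Prod>j\<in>UNIV. integral\<^sup>L lborel (f j))"
proof -
  define g where "g b = f (inv (\<lambda>i::'n. axis i (1::real)) b)" for b :: "real^'n"
  have gax: "g (axis i 1) = f i" for i
    unfolding g_def using inv_f_f[OF inj_axis1] by metis
  have pe: "(\<Prod>b\<in>Basis. h b) = (\<Prod>j\<in>UNIV. h (axis j 1))" for h :: "real^'n \<Rightarrow> complex"
    unfolding Basis_vec_eq by (subst prod.reindex[OF inj_axis1]) simp
  have e1: "(\<lambda>x::real^'n. \<Prod>j\<in>UNIV. f j (x $ j)) = (\<lambda>x. \<Prod>b\<in>Basis. g b (x \<bullet> b))"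
    by (rule ext) (simp add: pe gax inner_axis)
  have ig': "\<And>b. b \<in> Basis \<Longrightarrow> integrable lborel (g b)"
    unfolding Basis_vec_eq using ig gax by auto
  show "integrable lborel (\<lambda>x::real^'n. \<Prod>j\<in>UNIV. f j (x $ j))"
    unfolding e1 by (rule lborel_prod_Basis(1)[OF ig'])
  show "integral\<^sup>L lborel (\<lambda>x::real^'n. \<Prod>j\<in>UNIV. f j (x $ j)) = (\<Prod>j\<in>UNIV. integral\<^sup>L lborel (f j))"
  proof -
    have "integral\<^sup>L lborel (\<lambda>x::real^'n. \<Prod>j\<in>UNIV. f j (x $ j)) = (\<Prod>b\<in>Basis. integral\<^sup>L lborel (g b))"
      unfolding e1 by (rule lborel_prod_Basis(2)[OF ig'])
    also have "\<dots> = (\<Prod>j\<in>UNIV. integral\<^sup>L lborel (f j))"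
      by (simp only: pe gax)
    finally show ?thesis .
  qed
qed



definition RR :: "'a set \<Rightarrow> nat \<Rightarrow> ('a \<Rightarrow> nat) set" where
  "RR K n = {r. (\<forall>k. k \<notin> K \<longrightarrow> r k = 0) \<and> sum r K = n}"

lemma finite_RR: assumes "finite K" shows "finite (RR K n)"
proof -
  have "RR K n \<subseteq> (\<lambda>f k. if k \<in> K then f k else 0) ` (PiE K (\<lambda>_. {..n}))"
  proof
    fix r assume r: "r \<in> RR K n"
    have le: "r k \<le> n" if "k \<in> K" for k
      using r member_le_sum[OF that, of r] assms unfolding RR_def by auto
    have "r = (\<lambda>k. if k \<in> K then (restrict r K) k else 0)"
      using r unfolding RR_def by (auto simp: fun_eq_iff)
    moreover have "restrict r K \<in> PiE K (\<lambda>_. {..n})" using le by auto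
    ultimately show "r \<in> (\<lambda>f k. if k \<in> K then f k else 0) ` (PiE K (\<lambda>_. {..n}))" by blast
  qed
  then show ?thesis by (rule finite_subset) (intro finite_imageI finite_PiE assms; simp)
qed

lemma multinomial:
  fixes x :: "'a \<Rightarrow> real"
  assumes "finite K"
  shows "(\<Sum>k\<in>K. x k) ^ n = (\<Sum>r\<in>RR K n. fact n / (\<Prod>k\<in>K. fact (r k)) * (\<Prod>k\<in>K. x k ^ r k))"
  using assms
proof (induction K arbitrary: n rule: finite_induct)
  case empty
  show ?case
  proof (cases n)
    case 0
    have e: "RR {} n = {\<lambda>_. 0}" using 0 by (auto simp: RR_def)
    show ?thesis unfolding e using 0 by simp
  next
    case (Suc m)
    have e: "RR {} n = {}" using Suc by (auto simp: RR_def)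
    show ?thesis unfolding e using Suc by simp
  qed
next
  case (insert i K)
  have "(\<Sum>k\<in>insert i K. x k) ^ n = (x i + (\<Sum>k\<in>K. x k)) ^ n"
    using insert by simp
  also have "\<dots> = (\<Sum>j\<le>n. real (n choose j) * x i ^ j * (\<Sum>k\<in>K. x k) ^ (n - j))"
    by (rule binomial_ring)
  also have "\<dots> = (\<Sum>j\<le>n. \<Sum>r\<in>RR K (n - j). real (n choose j) * x i ^ j *
        (fact (n - j) / (\<Prod>k\<in>K. fact (r k)) * (\<Prod>k\<in>K. x k ^ r k)))"
    by (simp add: insert.IH sum_distrib_left)
  also have "\<dots> = (\<Sum>(j, r)\<in>Sigma {..n} (\<lambda>j. RR K (n - j)). real (n choose j) * x i ^ j *
        (fact (n - j) / (\<Prod>k\<in>K. fact (r k)) * (\<Prod>k\<in>K. x k ^ r k)))"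
    by (rule sum.Sigma) (auto intro: finite_RR insert.hyps)
  also have "\<dots> = (\<Sum>r\<in>RR (insert i K) n. fact n / (\<Prod>k\<in>insert i K. fact (r k)) * (\<Prod>k\<in>insert i K. x k ^ r k))"
  proof (rule sum.reindex_bij_witness[where i = "\<lambda>r. (r i, r(i := 0))" and j = "\<lambda>(j, r). r(i := j)"])
    fix p assume p: "p \<in> Sigma {..n} (\<lambda>j. RR K (n - j))"
    obtain j r where pj: "p = (j, r)" by (cases p)
    have j: "j \<le> n" and r: "r \<in> RR K (n - j)" using p pj by auto
    have ri: "r i = 0" using r insert.hyps unfolding RR_def by auto
    have sK: "(\<Sum>k\<in>K. (r(i := j)) k) = sum r K"
      using insert.hyps by (intro sum.cong) auto
    have pK: "(\<Prod>k\<in>K. h ((r(i := j)) k)) = (\<Prod>k\<in>K. h (r k))" for h :: "nat \<Rightarrow> real"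
      using insert.hyps by (intro prod.cong) auto
    have pK': "(\<Prod>k\<in>K. x k ^ ((r(i := j)) k)) = (\<Prod>k\<in>K. x k ^ r k)"
      using insert.hyps by (intro prod.cong) auto
    show "(\<lambda>r. (r i, r(i := 0))) ((\<lambda>(j, r). r(i := j)) p) = p"
      using pj ri by auto
    show "(\<lambda>(j, r). r(i := j)) p \<in> RR (insert i K) n"
      using pj r j insert.hyps sK unfolding RR_def by auto
    have P1: "(\<Prod>k\<in>insert i K. fact ((r(i := j)) k) :: real) = fact j * (\<Prod>k\<in>K. fact (r k))"
      using insert.hyps by (simp add: prod.insert pK[of fact, simplified])
    have P2: "(\<Prod>k\<in>insert i K. x k ^ ((r(i := j)) k)) = x i ^ j * (\<Prod>k\<in>K. x k ^ r k)"
      by (subst prod.insert[OF insert.hyps]) (simp only: pK' fun_upd_same)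
    have B: "real (n choose j) * fact (n - j) = fact n / fact j"
      using j by (simp add: binomial_fact field_simps)
    show "fact n / (\<Prod>k\<in>insert i K. fact ((\<lambda>(j, r). r(i := j)) p k)) *
          (\<Prod>k\<in>insert i K. x k ^ (\<lambda>(j, r). r(i := j)) p k) =
          (case p of (j, r) \<Rightarrow> real (n choose j) * x i ^ j *
            (fact (n - j) / (\<Prod>k\<in>K. fact (r k)) * (\<Prod>k\<in>K. x k ^ r k)))"
    proof -
      have B': "fact n = fact j * (real (n choose j) * fact (n - j))" using B by (simp add: field_simps)
      have nz: "(\<Prod>k\<in>K. fact (r k) :: real) \<noteq> 0" using insert.hyps by simp
      show ?thesis unfolding pj case_prod_conv P1 P2 B' using nz by (simp add: field_simps)
    qed
  next
    fix r assume r: "r \<in> RR (insert i K) n"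
    have sK: "(\<Sum>k\<in>K. (r(i := 0)) k) = sum r K"
      using insert.hyps by (intro sum.cong) auto
    have s: "r i + sum r K = n" using r insert.hyps unfolding RR_def by auto
    show "(\<lambda>(j, r). r(i := j)) ((\<lambda>r. (r i, r(i := 0))) r) = r" by auto
    show "(\<lambda>r. (r i, r(i := 0))) r \<in> Sigma {..n} (\<lambda>j. RR K (n - j))"
      using r s sK unfolding RR_def by auto
  qed
  finally show ?case .
qed

lemma term_eq:
  fixes A :: "real^'n::finite^'n" and w :: "real^'n" and N :: "'n \<Rightarrow> 'n \<Rightarrow> nat"
  assumes N: "\<And>j. sum (N j) UNIV = \<alpha> j"
  shows "(\<Prod>j\<in>UNIV. fact (\<alpha> j) / (\<Prod>k\<in>UNIV. fact (N j k)) * (\<Prod>k\<in>UNIV. (A$j$k * w$k) ^ N j k))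
    = (mi_fact \<alpha> / (\<Prod>j\<in>UNIV. \<Prod>k\<in>UNIV. fact (N j k)) * (\<Prod>j\<in>UNIV. \<Prod>k\<in>UNIV. (A$j$k) ^ N j k))
      * mi_pow w (\<lambda>k. \<Sum>j\<in>UNIV. N j k)"
proof -
  have "(\<Prod>j\<in>UNIV. \<Prod>k\<in>UNIV. (A$j$k * w$k) ^ N j k)
      = (\<Prod>j\<in>UNIV. \<Prod>k\<in>UNIV. (A$j$k) ^ N j k) * (\<Prod>j\<in>UNIV. \<Prod>k\<in>UNIV. (w$k) ^ N j k)"
    by (simp add: power_mult_distrib prod.distrib)
  also have "(\<Prod>j\<in>UNIV. \<Prod>k\<in>UNIV. (w$k) ^ N j k) = mi_pow w (\<lambda>k. \<Sum>j\<in>UNIV. N j k)"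
    unfolding mi_pow_def power_sum by (rule prod.swap)
  finally have e: "(\<Prod>j\<in>UNIV. \<Prod>k\<in>UNIV. (A$j$k * w$k) ^ N j k)
      = (\<Prod>j\<in>UNIV. \<Prod>k\<in>UNIV. (A$j$k) ^ N j k) * mi_pow w (\<lambda>k. \<Sum>j\<in>UNIV. N j k)" .
  show ?thesis
    unfolding prod.distrib prod_dividef e mi_fact_def by simp
qed

lemma mi_pow_Av:
  fixes A :: "real^'n::finite^'n" and w :: "real^'n"
  shows "mi_pow (A *v w) \<alpha> = (\<Sum>N\<in>{N. \<forall>j. sum (N j) UNIV = \<alpha> j}.
     (mi_fact \<alpha> / (\<Prod>j\<in>UNIV. \<Prod>k\<in>UNIV. fact (N j k)) * (\<Prod>j\<in>UNIV. \<Prod>k\<in>UNIV. (A$j$k) ^ N j k))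
      * mi_pow w (\<lambda>k. \<Sum>j\<in>UNIV. N j k))"
proof -
  have "mi_pow (A *v w) \<alpha> = (\<Prod>j\<in>UNIV. (\<Sum>k\<in>UNIV. A$j$k * w$k) ^ \<alpha> j)"
    by (simp add: mi_pow_def matrix_vector_mult_def)
  also have "\<dots> = (\<Prod>j\<in>UNIV. \<Sum>r\<in>RR UNIV (\<alpha> j). fact (\<alpha> j) / (\<Prod>k\<in>UNIV. fact (r k)) * (\<Prod>k\<in>UNIV. (A$j$k * w$k) ^ r k))"
    by (simp only: multinomial[OF finite[of "UNIV :: 'n set"]])
  also have "\<dots> = (\<Sum>N\<in>PiE UNIV (\<lambda>j. RR UNIV (\<alpha> j)). \<Prod>j\<in>UNIV. fact (\<alpha> j) / (\<Prod>k\<in>UNIV. fact (N j k)) * (\<Prod>k\<in>UNIV. (A$j$k * w$k) ^ N j k))"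
    by (rule prod_sum_PiE) (auto intro: finite_RR)
  also have "PiE UNIV (\<lambda>j. RR UNIV (\<alpha> j)) = {N. \<forall>j. sum (N j) UNIV = \<alpha> j}"
    by (auto simp: PiE_UNIV_domain RR_def)
  also have "(\<Sum>N\<in>{N. \<forall>j. sum (N j) UNIV = \<alpha> j}. \<Prod>j\<in>UNIV. fact (\<alpha> j) / (\<Prod>k\<in>UNIV. fact (N j k)) * (\<Prod>k\<in>UNIV. (A$j$k * w$k) ^ N j k))
     = (\<Sum>N\<in>{N. \<forall>j. sum (N j) UNIV = \<alpha> j}.
     (mi_fact \<alpha> / (\<Prod>j\<in>UNIV. \<Prod>k\<in>UNIV. fact (N j k)) * (\<Prod>j\<in>UNIV. \<Prod>k\<in>UNIV. (A$j$k) ^ N j k))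
      * mi_pow w (\<lambda>k. \<Sum>j\<in>UNIV. N j k))"
    by (rule sum.cong[OF refl]) (rule term_eq, simp)
  finally show ?thesis .
qed

lemma finite_multi_indices: "finite (multi_indices m :: ('n::finite \<Rightarrow> nat) set)"
proof (rule finite_subset)
  show "multi_indices m \<subseteq> PiE (UNIV::'n set) (\<lambda>_. {..m})"
  proof
    fix \<alpha> :: "'n \<Rightarrow> nat" assume a: "\<alpha> \<in> multi_indices m"
    have "\<alpha> j \<le> m" for j
      using a member_le_sum[of j UNIV \<alpha>] unfolding multi_indices_def mi_abs_def by auto
    then show "\<alpha> \<in> PiE UNIV (\<lambda>_. {..m})" by (auto simp: PiE_UNIV_domain)
  qed
qed (intro finite_PiE; simp)

lemma finite_rowsum: "finite {N :: 'n::finite \<Rightarrow> 'n \<Rightarrow> nat. \<forall>j. sum (N j) UNIV = \<alpha> j}"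
proof -
  have "{N :: 'n \<Rightarrow> 'n \<Rightarrow> nat. \<forall>j. sum (N j) UNIV = \<alpha> j} = PiE UNIV (\<lambda>j. RR UNIV (\<alpha> j))"
    by (auto simp: PiE_UNIV_domain RR_def)
  then show ?thesis by (simp add: finite_PiE finite_RR)
qed

lemma g_expand:
  fixes A :: "real^'n::finite^'n" and w :: "real^'n"
  assumes a: "\<alpha> \<in> multi_indices m"
  shows "mi_pow (A *v w) \<alpha> = (\<Sum>\<beta>\<in>multi_indices m. Ccoef \<alpha> \<beta> A * mi_pow w \<beta>)"
proof -
  let ?S = "{N :: 'n \<Rightarrow> 'n \<Rightarrow> nat. \<forall>j. sum (N j) UNIV = \<alpha> j}"
  let ?cs = "\<lambda>N :: 'n \<Rightarrow> 'n \<Rightarrow> nat. (\<lambda>k. \<Sum>j\<in>UNIV. N j k)"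
  let ?h = "\<lambda>N. (mi_fact \<alpha> / (\<Prod>j\<in>UNIV. \<Prod>k\<in>UNIV. fact (N j k)) * (\<Prod>j\<in>UNIV. \<Prod>k\<in>UNIV. (A$j$k) ^ N j k))
      * mi_pow w (?cs N)"
  have img: "?cs ` ?S \<subseteq> multi_indices m"
  proof
    fix b assume "b \<in> ?cs ` ?S"
    then obtain N where N: "N \<in> ?S" and b: "b = ?cs N" by blast
    have "mi_abs b = (\<Sum>j\<in>UNIV. \<Sum>k\<in>UNIV. N j k)"
      unfolding b mi_abs_def by (rule sum.swap)
    also have "\<dots> = mi_abs \<alpha>" using N by (simp add: mi_abs_def)
    finally show "b \<in> multi_indices m" using a by (simp add: multi_indices_def)
  qed
  have "mi_pow (A *v w) \<alpha> = sum ?h ?S" by (rule mi_pow_Av)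
  also have "\<dots> = (\<Sum>\<beta>\<in>multi_indices m. sum ?h {N. N \<in> ?S \<and> ?cs N = \<beta>})"
    by (rule sum.group[symmetric, OF finite_rowsum finite_multi_indices img])
  also have "\<dots> = (\<Sum>\<beta>\<in>multi_indices m. Ccoef \<alpha> \<beta> A * mi_pow w \<beta>)"
  proof (rule sum.cong[OF refl])
    fix \<beta> :: "'n \<Rightarrow> nat"
    have set: "{N. N \<in> ?S \<and> ?cs N = \<beta>} = Nset \<alpha> \<beta>"
      by (auto simp: Nset_def fun_eq_iff)
    show "sum ?h {N. N \<in> ?S \<and> ?cs N = \<beta>} = Ccoef \<alpha> \<beta> A * mi_pow w \<beta>"
      unfolding set Ccoef_def sum_distrib_right
      by (rule sum.cong[OF refl]) (simp add: Nset_def)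
  qed
  finally show ?thesis .
qed



lemma cis_sum: "finite I \<Longrightarrow> cis (sum f I) = (\<Prod>i\<in>I. cis (f i))"
  by (induction I rule: finite_induct) (simp_all add: cis_mult[symmetric])

lemma const_powr: "(2 * pi) powr (- real CARD('n::finite) / 2) = (1 / sqrt (2 * pi)) ^ CARD('n)"
proof -
  have "(2 * pi) powr (- real CARD('n) / 2) = ((2 * pi) powr (- 1 / 2)) powr real CARD('n)"
    by (simp add: powr_powr)
  also have "\<dots> = ((2 * pi) powr (- 1 / 2)) ^ CARD('n)"
    by (rule powr_realpow) simp
  also have "(2 * pi) powr (- 1 / 2) = 1 / sqrt (2 * pi)"
    by (simp add: powr_minus_divide powr_half_sqrt)
  finally show ?thesis .
qed

lemma nd_prod: "Defs.std_normal_density (v::real^'n::finite) = (\<Prod>j\<in>UNIV. phi1 (v$j))"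
proof -
  have n2: "(norm v)\<^sup>2 = (\<Sum>j\<in>UNIV. (v$j)\<^sup>2)"
    by (simp only: power2_norm_eq_inner) (simp add: inner_vec_def power2_eq_square)
  have e: "exp (- (norm v)\<^sup>2 / 2) = (\<Prod>j\<in>UNIV. exp (- (v$j)\<^sup>2 / 2))"
    unfolding n2 by (simp add: exp_sum[symmetric] sum_negf sum_divide_distrib)
  show ?thesis
    unfolding Defs.std_normal_density_def phi1_def prod.distrib e const_powr
    by (simp add: prod_constant)
qed

lemma phiV_prod: "phi_V (v::real^'n::finite) = (\<Prod>j\<in>UNIV. exp (- (v$j)\<^sup>2 / 2))"
proof -
  have n2: "(norm v)\<^sup>2 = (\<Sum>j\<in>UNIV. (v$j)\<^sup>2)"
    by (simp only: power2_norm_eq_inner) (simp add: inner_vec_def power2_eq_square)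
  show ?thesis
    unfolding phi_V_def n2 by (simp add: exp_sum[symmetric] sum_negf sum_divide_distrib)
qed

lemma integrand_eq:
  fixes A :: "real^'n::finite^'n" and w z \<omega> :: "real^'n"
  shows "cis (\<omega> \<bullet> w) * complex_of_real (mpoly_eval m a (A *v w) * Defs.std_normal_density (z - w))
   = (\<Sum>\<alpha>\<in>multi_indices m. \<Sum>\<beta>\<in>multi_indices m. complex_of_real (a \<alpha> * Ccoef \<alpha> \<beta> A) *
        (\<Prod>j\<in>UNIV. cis (\<omega>$j * w$j) * complex_of_real ((w$j) ^ (\<beta> j) * phi1 (z$j - w$j))))"
proof -
  have P: "(\<Prod>j\<in>UNIV. cis (\<omega>$j * w$j) * complex_of_real ((w$j) ^ (\<beta> j) * phi1 (z$j - w$j)))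
      = cis (\<omega> \<bullet> w) * complex_of_real (mi_pow w \<beta> * Defs.std_normal_density (z - w))" for \<beta>
    by (simp add: prod.distrib cis_sum inner_vec_def nd_prod mi_pow_def)
  have g: "mpoly_eval m a (A *v w) = (\<Sum>\<alpha>\<in>multi_indices m. a \<alpha> * (\<Sum>\<beta>\<in>multi_indices m. Ccoef \<alpha> \<beta> A * mi_pow w \<beta>))"
    unfolding mpoly_eval_def by (rule sum.cong[OF refl]) (simp add: g_expand)
  show ?thesis
    unfolding P g
    by (simp add: sum_distrib_left sum_distrib_right mult_ac)
qed

lemma P_int:
  fixes z \<omega> :: "real^'n::finite"
  shows "integrable lborel (\<lambda>w::real^'n. \<Prod>j\<in>UNIV. cis (\<omega>$j * w$j) * complex_of_real ((w$j) ^ (\<beta> j) * phi1 (z$j - w$j)))"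
    and "integral\<^sup>L lborel (\<lambda>w::real^'n. \<Prod>j\<in>UNIV. cis (\<omega>$j * w$j) * complex_of_real ((w$j) ^ (\<beta> j) * phi1 (z$j - w$j)))
       = cis (\<omega> \<bullet> z) * complex_of_real (phi_V \<omega>) * (\<Prod>j\<in>UNIV. D (\<beta> j) (z$j) (\<i> * of_real (\<omega>$j)))"
proof -
  let ?f = "\<lambda>j t. cis (\<omega>$j * t) * complex_of_real (t ^ (\<beta> j) * phi1 (z$j - t))"
  have ig: "\<And>j. integrable lborel (?f j)" by (rule K1_integrable)
  show "integrable lborel (\<lambda>w::real^'n. \<Prod>j\<in>UNIV. cis (\<omega>$j * w$j) * complex_of_real ((w$j) ^ (\<beta> j) * phi1 (z$j - w$j)))"
    using lborel_prod_vec(1)[OF ig] by simp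
  have "integral\<^sup>L lborel (\<lambda>w::real^'n. \<Prod>j\<in>UNIV. cis (\<omega>$j * w$j) * complex_of_real ((w$j) ^ (\<beta> j) * phi1 (z$j - w$j)))
      = (\<Prod>j\<in>UNIV. integral\<^sup>L lborel (?f j))"
    using lborel_prod_vec(2)[OF ig] by simp
  also have "\<dots> = (\<Prod>j\<in>UNIV. cis (\<omega>$j * z$j) * (of_real (exp (- (\<omega>$j)\<^sup>2 / 2)) * D (\<beta> j) (z$j) (\<i> * of_real (\<omega>$j))))"
    by (simp only: K1)
  also have "\<dots> = cis (\<omega> \<bullet> z) * complex_of_real (phi_V \<omega>) * (\<Prod>j\<in>UNIV. D (\<beta> j) (z$j) (\<i> * of_real (\<omega>$j)))"
    by (simp add: prod.distrib cis_sum inner_vec_def phiV_prod mult_ac)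
  finally show "integral\<^sup>L lborel (\<lambda>w::real^'n. \<Prod>j\<in>UNIV. cis (\<omega>$j * w$j) * complex_of_real ((w$j) ^ (\<beta> j) * phi1 (z$j - w$j)))
       = cis (\<omega> \<bullet> z) * complex_of_real (phi_V \<omega>) * (\<Prod>j\<in>UNIV. D (\<beta> j) (z$j) (\<i> * of_real (\<omega>$j)))" .
qed

lemma mnu_m1: "mnu \<nu> z = (\<Prod>r\<in>UNIV. m1 (\<nu> r) (z$r))"
  by (simp add: mnu_def m1_def)

lemma D_prod:
  fixes z \<omega> :: "real^'n::finite"
  shows "(\<Prod>j\<in>UNIV. D (\<beta> j) (z$j) (\<i> * of_real (\<omega>$j)))
    = (\<Sum>\<gamma>\<in>{\<gamma>. \<forall>j. \<gamma> j \<le> \<beta> j}. complex_of_real (mi_binom \<beta> \<gamma> * mnu (\<lambda>j. \<beta> j - \<gamma> j) z) * mi_ipow \<omega> \<gamma>)"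
proof -
  have "(\<Prod>j\<in>UNIV. D (\<beta> j) (z$j) (\<i> * of_real (\<omega>$j)))
     = (\<Sum>\<gamma>\<in>PiE UNIV (\<lambda>j. {..\<beta> j}). \<Prod>j\<in>UNIV. of_nat (\<beta> j choose \<gamma> j) * of_real (m1 (\<beta> j - \<gamma> j) (z$j)) * (\<i> * of_real (\<omega>$j)) ^ \<gamma> j)"
    unfolding D_def by (rule prod_sum_PiE) auto
  also have "PiE UNIV (\<lambda>j. {..\<beta> j}) = {\<gamma>. \<forall>j. \<gamma> j \<le> \<beta> j}"
    by (auto simp: PiE_UNIV_domain)
  finally show ?thesis
    by (simp add: prod.distrib mi_binom_def mnu_m1 mi_ipow_def)
qed



lemma sum_identity:
  fixes A :: "real^'n::finite^'n" and z \<omega> :: "real^'n"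
  shows "(\<Sum>\<alpha>\<in>multi_indices m. \<Sum>\<beta>\<in>multi_indices m. complex_of_real (a \<alpha> * Ccoef \<alpha> \<beta> A) *
            (\<Prod>j\<in>UNIV. D (\<beta> j) (z$j) (\<i> * of_real (\<omega>$j))))
       = (\<Sum>\<gamma>\<in>multi_indices m. complex_of_real (bcoef m a A z \<gamma>) * mi_ipow \<omega> \<gamma>)"
proof -
  let ?M = "multi_indices m :: ('n \<Rightarrow> nat) set"
  let ?F = "\<lambda>\<alpha> \<beta> \<gamma>. complex_of_real (a \<alpha> * (Ccoef \<alpha> \<beta> A * mi_binom \<beta> \<gamma> * mnu (\<lambda>j. \<beta> j - \<gamma> j) z)) * mi_ipow \<omega> \<gamma>"
  have sets: "{\<gamma>. \<forall>j. \<gamma> j \<le> \<beta> j} = {\<gamma>\<in>?M. \<forall>j. \<gamma> j \<le> \<beta> j}" if "\<beta> \<in> ?M" for \<beta>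
  proof -
    have "\<gamma> \<in> ?M" if "\<forall>j. \<gamma> j \<le> \<beta> j" for \<gamma>
    proof -
      have "mi_abs \<gamma> \<le> mi_abs \<beta>" unfolding mi_abs_def using that by (intro sum_mono) auto
      then show ?thesis using \<open>\<beta> \<in> ?M\<close> by (simp add: multi_indices_def)
    qed
    then show ?thesis by auto
  qed
  have "(\<Sum>\<alpha>\<in>?M. \<Sum>\<beta>\<in>?M. complex_of_real (a \<alpha> * Ccoef \<alpha> \<beta> A) *
            (\<Prod>j\<in>UNIV. D (\<beta> j) (z$j) (\<i> * of_real (\<omega>$j))))
      = (\<Sum>\<alpha>\<in>?M. \<Sum>\<beta>\<in>?M. \<Sum>\<gamma>\<in>{\<gamma>\<in>?M. \<forall>j. \<gamma> j \<le> \<beta> j}. ?F \<alpha> \<beta> \<gamma>)"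
  proof (intro sum.cong refl)
    fix \<alpha> \<beta> assume b: "\<beta> \<in> ?M"
    show "complex_of_real (a \<alpha> * Ccoef \<alpha> \<beta> A) * (\<Prod>j\<in>UNIV. D (\<beta> j) (z$j) (\<i> * of_real (\<omega>$j)))
        = (\<Sum>\<gamma>\<in>{\<gamma>\<in>?M. \<forall>j. \<gamma> j \<le> \<beta> j}. ?F \<alpha> \<beta> \<gamma>)"
      unfolding D_prod sets[OF b, symmetric] sum_distrib_left
      by (rule sum.cong[OF refl]) (simp add: mult_ac)
  qed
  also have "\<dots> = (\<Sum>\<alpha>\<in>?M. \<Sum>\<gamma>\<in>?M. \<Sum>\<beta>\<in>{\<beta>\<in>?M. \<forall>j. \<gamma> j \<le> \<beta> j}. ?F \<alpha> \<beta> \<gamma>)"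
    by (intro sum.cong refl sum.swap_restrict finite_multi_indices)
  also have "\<dots> = (\<Sum>\<gamma>\<in>?M. \<Sum>\<alpha>\<in>?M. \<Sum>\<beta>\<in>{\<beta>\<in>?M. \<forall>j. \<gamma> j \<le> \<beta> j}. ?F \<alpha> \<beta> \<gamma>)"
    by (rule sum.swap)
  also have "\<dots> = (\<Sum>\<gamma>\<in>?M. complex_of_real (bcoef m a A z \<gamma>) * mi_ipow \<omega> \<gamma>)"
    unfolding bcoef_def of_real_sum sum_distrib_right sum_distrib_left of_real_mult
    by (simp add: mult_ac)
  finally show ?thesis .
qed

theorem mainTheorem14:
  fixes \<Sigma>0 A :: "real^'n::finite^'n" and y :: "real^'n" and m :: nat
    and a :: "('n \<Rightarrow> nat) \<Rightarrow> real" and \<omega> :: "real^'n"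
  assumes sym: "transpose \<Sigma>0 = \<Sigma>0"
    and pd: "\<And>x. x \<noteq> 0 \<Longrightarrow> x \<bullet> (\<Sigma>0 *v x) > 0"
    and A_sym: "transpose A = A"
    and A_pd: "\<And>x. x \<noteq> 0 \<Longrightarrow> x \<bullet> (A *v x) > 0"
    and A_sq: "A ** A = \<Sigma>0"
  shows "(let z0 = matrix_inv A *v y;
              lam = (\<lambda>w. complex_of_real (mpoly_eval m a (A *v w) * Defs.std_normal_density (z0 - w)))
          in fourier lam \<omega> / complex_of_real (phi_V (- \<omega>))
             = cis (\<omega> \<bullet> z0) *
               (\<Sum>\<gamma>\<in>multi_indices m. complex_of_real (bcoef m a A z0 \<gamma>) * mi_ipow \<omega> \<gamma>))"
proof -
  define z0 where "z0 = matrix_inv A *v y"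
  let ?M = "multi_indices m :: ('n \<Rightarrow> nat) set"
  let ?P = "\<lambda>\<beta> (w::real^'n). \<Prod>j\<in>UNIV. cis (\<omega>$j * w$j) * complex_of_real ((w$j) ^ (\<beta> j) * phi1 (z0$j - w$j))"
  let ?S = "\<Sum>\<alpha>\<in>?M. \<Sum>\<beta>\<in>?M. complex_of_real (a \<alpha> * Ccoef \<alpha> \<beta> A) *
            (\<Prod>j\<in>UNIV. D (\<beta> j) (z0$j) (\<i> * of_real (\<omega>$j)))"
  have "fourier (\<lambda>w. complex_of_real (mpoly_eval m a (A *v w) * Defs.std_normal_density (z0 - w))) \<omega>
      = integral\<^sup>L lborel (\<lambda>w. \<Sum>\<alpha>\<in>?M. \<Sum>\<beta>\<in>?M. complex_of_real (a \<alpha> * Ccoef \<alpha> \<beta> A) * ?P \<beta> w)"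
    unfolding fourier_def integrand_eq ..
  also have "\<dots> = (\<Sum>\<alpha>\<in>?M. \<Sum>\<beta>\<in>?M. complex_of_real (a \<alpha> * Ccoef \<alpha> \<beta> A) * integral\<^sup>L lborel (?P \<beta>))"
  proof -
    have ip: "\<And>\<beta>. integrable lborel (?P \<beta>)" by (rule P_int(1))
    have "integral\<^sup>L lborel (\<lambda>w. \<Sum>\<alpha>\<in>?M. \<Sum>\<beta>\<in>?M. complex_of_real (a \<alpha> * Ccoef \<alpha> \<beta> A) * ?P \<beta> w)
        = (\<Sum>\<alpha>\<in>?M. integral\<^sup>L lborel (\<lambda>w. \<Sum>\<beta>\<in>?M. complex_of_real (a \<alpha> * Ccoef \<alpha> \<beta> A) * ?P \<beta> w))"
      by (rule Bochner_Integration.integral_sum)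
         (intro Bochner_Integration.integrable_sum Bochner_Integration.integrable_mult_right ip)
    also have "\<dots> = (\<Sum>\<alpha>\<in>?M. \<Sum>\<beta>\<in>?M. integral\<^sup>L lborel (\<lambda>w. complex_of_real (a \<alpha> * Ccoef \<alpha> \<beta> A) * ?P \<beta> w))"
      by (intro sum.cong refl Bochner_Integration.integral_sum Bochner_Integration.integrable_mult_right ip)
    also have "\<dots> = (\<Sum>\<alpha>\<in>?M. \<Sum>\<beta>\<in>?M. complex_of_real (a \<alpha> * Ccoef \<alpha> \<beta> A) * integral\<^sup>L lborel (?P \<beta>))"
      by (intro sum.cong refl Bochner_Integration.integral_mult_right_zero)
    finally show ?thesis .
  qed
  also have "\<dots> = cis (\<omega> \<bullet> z0) * complex_of_real (phi_V \<omega>) * ?S"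
    unfolding P_int(2) sum_distrib_left by (simp add: mult_ac)
  finally have F: "fourier (\<lambda>w. complex_of_real (mpoly_eval m a (A *v w) * Defs.std_normal_density (z0 - w))) \<omega>
      = cis (\<omega> \<bullet> z0) * complex_of_real (phi_V \<omega>) * ?S" .
  have pv: "phi_V (- \<omega>) = phi_V \<omega>" by (simp add: phi_V_def)
  have nz: "complex_of_real (phi_V \<omega>) \<noteq> 0" by (simp add: phi_V_def)
  show ?thesis
    unfolding Let_def z0_def[symmetric] F pv sum_identity[symmetric]
    using nz by (simp add: field_simps)
qed

end
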